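(* Let $\bm\mu=(\mu_1,\dots,\mu_r)$ be finite positive Borel measures on the unit circle with infinite supports and let $\bm n,\bm m\in\mathbb N^r$. The following are equivalent: (a) $(\bm n,\bm m)$ is normal, i.e. there is a unique $\Phi\in\operatorname{span}\{z^p\}_{p=-|\bm m|}^{|\bm n|}$ with coefficient of $z^{|\bm n|}$ equal to $1$ satisfying $\int\Phi(w)w^{-p}\,d\mu_j(w)=0$ for $p=-m_j,\dots,n_j-1$, $j=1,\dots,r$; (b) there is no nonzero $\Phi\in\operatorname{span}\{z^p\}_{p=-|\bm m|}^{|\bm n|-1}$ satisfying the orthogonality relations in (a); (c) there is a unique $\Phi^*\in\operatorname{span}\{z^p\}_{p=-|\bm m|}^{|\bm n|}$ with coefficient of $z^{-|\bm m|}$ equal to $1$ satisfying $\int\Phi^*(w)w^{-p}\,d\mu_j(w)=0$ for $p=-m_j+1,\dots,n_j$, $j=1,\dots,r$; (d) there is no nonzero $\Phi^*\in\operatorname{span}\{z^p\}_{p=-|\bm m|+1}^{|\bm n|}$ satisfying the orthogonality relations in (c).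
   Context: $|\bm n|=n_1+\dots+n_r$ for $\bm n=(n_1,\dots,n_r)$ with non-negative integer entries; $\operatorname{span}\{z^p\}_{p=a}^b$ denotes the span of the monomials $z^a,z^{a+1},\dots,z^b$ (integer exponents). *)

theory Defs
  imports "HOL-Analysis.Analysis"
begin

definition msupport :: "complex measure \<Rightarrow> complex set" where
  "msupport M = {x. \<forall>e>0. emeasure M (ball x e) > 0}"

definition circle_measure :: "complex measure \<Rightarrow> bool" where
  "circle_measure M \<longleftrightarrow> sets M = sets borel \<and> finite_measure M \<and>
     emeasure M (- sphere 0 1) = 0"

text \<open>A Laurent polynomial in span{z^p}, p = a..b, is represented by its
  coefficient function c, vanishing outside {a..b}.\<close>
definition in_span :: "(int \<Rightarrow> complex) \<Rightarrow> int \<Rightarrow> int \<Rightarrow> bool" where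
  "in_span c a b \<longleftrightarrow> (\<forall>p. p < a \<or> b < p \<longrightarrow> c p = 0)"

definition laurent :: "(int \<Rightarrow> complex) \<Rightarrow> int \<Rightarrow> int \<Rightarrow> complex \<Rightarrow> complex" where
  "laurent c a b w = (\<Sum>p = a..b. c p * w powi p)"

definition mnorm :: "nat \<Rightarrow> (nat \<Rightarrow> nat) \<Rightarrow> nat" where
  "mnorm r n = (\<Sum>j<r. n j)"

end

theory Submission
  imports Defs
begin


lemma meas_powi[measurable]: "(\<lambda>w::complex. w powi k) \<in> borel_measurable borel"
  unfolding power_int_def by (cases "k \<ge> 0") auto

lemma cm_facts:
  assumes "circle_measure M"
  shows "finite_measure M" "sets M = sets borel" "AE w in M. norm w = 1"
proof -
  show f: "finite_measure M" "sets M = sets borel" using assms by (auto simp: circle_measure_def)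
  have "emeasure M (- sphere 0 1) = 0" using assms by (auto simp: circle_measure_def)
  moreover have "- sphere 0 1 \<in> sets M" using f by auto
  ultimately have "AE w in M. w \<notin> - sphere 0 1" by (intro AE_I[where N="- sphere 0 1"]) auto
  then show "AE w in M. norm w = 1" by (auto simp: dist_norm)
qed

lemma meas_M:
  assumes "circle_measure M"
  shows "(\<lambda>w::complex. w powi q * w powi p) \<in> borel_measurable M"
proof -
  have "sets M = sets borel" using cm_facts[OF assms] by auto
  then show ?thesis by (subst measurable_cong_sets[of M borel]) auto
qed

lemma integ_M:
  assumes "circle_measure M"
  shows "integrable M (\<lambda>w::complex. w powi q * w powi p)"
proof -
  interpret finite_measure M using cm_facts[OF assms] by auto
  show ?thesis
  proof (rule integrable_const_bound[where B=1])
    show "AE x in M. norm (x powi q * x powi p) \<le> 1"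
      using cm_facts(3)[OF assms] by eventually_elim (simp add: norm_mult norm_power_int)
  qed (rule meas_M[OF assms])
qed

definition mom :: "complex measure \<Rightarrow> int \<Rightarrow> int \<Rightarrow> complex" where
  "mom M p q = (\<integral>w. w powi q * w powi (-p) \<partial>M)"

lemma int_laurent:
  assumes "circle_measure M"
  shows "(\<integral>w. laurent c a b w * w powi (-p) \<partial>M) = (\<Sum>q=a..b. c q * mom M p q)"
proof -
  have "(\<integral>w. laurent c a b w * w powi (-p) \<partial>M) = (\<integral>w. (\<Sum>q=a..b. c q * (w powi q * w powi (-p))) \<partial>M)"
    by (simp add: laurent_def sum_distrib_right mult.assoc)
  also have "\<dots> = (\<Sum>q=a..b. c q * mom M p q)"
    using integ_M[OF assms] by (simp add: mom_def)
  finally show ?thesis .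
qed

lemma mom_shift:
  assumes "circle_measure M"
  shows "mom M (p+1) (q+1) = mom M p q"
  unfolding mom_def
proof (rule integral_cong_AE)
  show "AE w in M. w powi (q + 1) * w powi (- (p + 1)) = w powi q * w powi (- p)"
    using cm_facts(3)[OF assms]
  proof eventually_elim
    case (elim w)
    then have "w \<noteq> 0" by auto
    have "w powi (q + 1) * w powi (- (p + 1)) = w powi (q + 1 + - (p + 1))"
      using \<open>w \<noteq> 0\<close> by (rule power_int_add[symmetric, OF disjI1])
    also have "\<dots> = w powi (q + - p)" by (simp add: algebra_simps)
    also have "\<dots> = w powi q * w powi (- p)" using \<open>w \<noteq> 0\<close> by (rule power_int_add[OF disjI1])
    finally show ?case .
  qed
qed (auto intro: meas_M[OF assms])


lemma underdet:
  fixes H :: "'e \<Rightarrow> int \<Rightarrow> complex"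
  assumes "finite E" "finite I" "card E < card I"
  shows "\<exists>c. (\<forall>q. q \<notin> I \<longrightarrow> c q = 0) \<and> (\<exists>q\<in>I. c q \<noteq> 0) \<and> (\<forall>e\<in>E. (\<Sum>q\<in>I. c q * H e q) = 0)"
  using assms
proof (induction E arbitrary: I H rule: finite_induct)
  case empty
  then obtain q0 where "q0 \<in> I" by fastforce
  then show ?case by (intro exI[of _ "\<lambda>q. if q = q0 then 1 else 0"]) auto
next
  case (insert e E)
  have cI: "card E + 1 < card I" using insert by simp
  show ?case
  proof (cases "\<forall>q\<in>I. H e q = 0")
    case True
    obtain c where c: "\<forall>q. q \<notin> I \<longrightarrow> c q = 0" "\<exists>q\<in>I. c q \<noteq> 0" "\<forall>e\<in>E. (\<Sum>q\<in>I. c q * H e q) = 0"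
      using insert.IH[of I H] insert.prems cI by auto
    show ?thesis using c True by (intro exI[of _ c]) auto
  next
    case False
    then obtain q0 where q0: "q0 \<in> I" "H e q0 \<noteq> 0" by auto
    define I' where "I' = I - {q0}"
    define H' where "H' = (\<lambda>x q. H x q - H x q0 * H e q / H e q0)"
    have fI': "finite I'" using insert.prems by (simp add: I'_def)
    have "card I' = card I - 1" using q0 insert.prems by (simp add: I'_def)
    then have "card E < card I'" using cI by simp
    then obtain c' where c': "\<forall>q. q \<notin> I' \<longrightarrow> c' q = 0" "\<exists>q\<in>I'. c' q \<noteq> 0"
        "\<forall>x\<in>E. (\<Sum>q\<in>I'. c' q * H' x q) = 0"
      using insert.IH[OF fI', of H'] by auto
    define c where "c = c'(q0 := - (\<Sum>q\<in>I'. c' q * H e q) / H e q0)"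
    have split: "(\<Sum>q\<in>I. c q * H x q) = c q0 * H x q0 + (\<Sum>q\<in>I'. c' q * H x q)" for x
    proof -
      have "(\<Sum>q\<in>I. c q * H x q) = c q0 * H x q0 + (\<Sum>q\<in>I'. c q * H x q)"
        unfolding I'_def using q0 insert.prems by (subst sum.remove[of _ q0]) auto
      also have "(\<Sum>q\<in>I'. c q * H x q) = (\<Sum>q\<in>I'. c' q * H x q)"
        by (rule sum.cong) (auto simp: c_def I'_def)
      finally show ?thesis .
    qed
    have "\<forall>x\<in>insert e E. (\<Sum>q\<in>I. c q * H x q) = 0"
    proof
      fix x assume x: "x \<in> insert e E"
      show "(\<Sum>q\<in>I. c q * H x q) = 0"
      proof (cases "x = e")
        case True
        show ?thesis unfolding True split using q0 by (simp add: c_def)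
      next
        case False
        then have "x \<in> E" using x by auto
        then have "(\<Sum>q\<in>I'. c' q * H' x q) = 0" using c' by auto
        then have h: "(\<Sum>q\<in>I'. c' q * H x q) - H x q0 / H e q0 * (\<Sum>q\<in>I'. c' q * H e q) = 0"
          unfolding H'_def by (simp add: algebra_simps sum_subtractf sum_distrib_left sum_divide_distrib)
        have "c q0 * H x q0 = - (H x q0 / H e q0 * (\<Sum>q\<in>I'. c' q * H e q))"
          by (simp add: c_def)
        then show ?thesis using h by (simp add: split)
      qed
    qed
    moreover have "\<forall>q. q \<notin> I \<longrightarrow> c q = 0" using c' q0 by (auto simp: c_def I'_def)
    moreover have "\<exists>q\<in>I. c q \<noteq> 0" using c' by (auto simp: c_def I'_def)
    ultimately show ?thesis by blast
  qed
qed


lemma G: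
  fixes H :: "'e \<Rightarrow> int \<Rightarrow> complex"
  assumes fE: "finite E" and fS: "finite S" and q0: "q0 \<notin> S" and cE: "card E = card S"
  shows "(\<exists>!c. (\<forall>q. q \<notin> insert q0 S \<longrightarrow> c q = 0) \<and> c q0 = 1 \<and> (\<forall>e\<in>E. (\<Sum>q\<in>insert q0 S. c q * H e q) = 0))
     \<longleftrightarrow> \<not> (\<exists>c. (\<forall>q. q \<notin> S \<longrightarrow> c q = 0) \<and> c \<noteq> (\<lambda>_. 0) \<and> (\<forall>e\<in>E. (\<Sum>q\<in>S. c q * H e q) = 0))"
proof -
  have ins: "(\<Sum>q\<in>insert q0 S. c q * H e q) = c q0 * H e q0 + (\<Sum>q\<in>S. c q * H e q)" for c e
    using fS q0 by simp
  show ?thesis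
  proof
    assume ex1: "\<exists>!c. (\<forall>q. q \<notin> insert q0 S \<longrightarrow> c q = 0) \<and> c q0 = 1 \<and> (\<forall>e\<in>E. (\<Sum>q\<in>insert q0 S. c q * H e q) = 0)"
    then obtain c0 where c0all: "(\<forall>q. q \<notin> insert q0 S \<longrightarrow> c0 q = 0) \<and> c0 q0 = 1 \<and> (\<forall>e\<in>E. (\<Sum>q\<in>insert q0 S. c0 q * H e q) = 0)"
      by blast
    then have c0: "(\<forall>q. q \<notin> insert q0 S \<longrightarrow> c0 q = 0)" "c0 q0 = 1" "(\<forall>e\<in>E. (\<Sum>q\<in>insert q0 S. c0 q * H e q) = 0)"
      by auto
    have uniq: "\<And>c. (\<forall>q. q \<notin> insert q0 S \<longrightarrow> c q = 0) \<and> c q0 = 1 \<and> (\<forall>e\<in>E. (\<Sum>q\<in>insert q0 S. c q * H e q) = 0) \<Longrightarrow> c = c0"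
      using ex1 c0all by blast
    show "\<not> (\<exists>c. (\<forall>q. q \<notin> S \<longrightarrow> c q = 0) \<and> c \<noteq> (\<lambda>_. 0) \<and> (\<forall>e\<in>E. (\<Sum>q\<in>S. c q * H e q) = 0))"
    proof
      assume "\<exists>c. (\<forall>q. q \<notin> S \<longrightarrow> c q = 0) \<and> c \<noteq> (\<lambda>_. 0) \<and> (\<forall>e\<in>E. (\<Sum>q\<in>S. c q * H e q) = 0)"
      then obtain d where d: "\<forall>q. q \<notin> S \<longrightarrow> d q = 0" "d \<noteq> (\<lambda>_. 0)" "\<forall>e\<in>E. (\<Sum>q\<in>S. d q * H e q) = 0"
        by blast
      define c1 where "c1 = (\<lambda>q. c0 q + d q)"
      have dq0: "d q0 = 0" using d q0 by auto
      have "(\<forall>q. q \<notin> insert q0 S \<longrightarrow> c1 q = 0) \<and> c1 q0 = 1 \<and> (\<forall>e\<in>E. (\<Sum>q\<in>insert q0 S. c1 q * H e q) = 0)"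
      proof (intro conjI ballI allI impI)
        fix e assume e: "e \<in> E"
        have "(\<Sum>q\<in>insert q0 S. c1 q * H e q) = (\<Sum>q\<in>insert q0 S. c0 q * H e q) + (\<Sum>q\<in>insert q0 S. d q * H e q)"
          by (simp add: c1_def distrib_right sum.distrib)
        also have "\<dots> = 0" using c0 d e dq0 by (simp only: ins) simp
        finally show "(\<Sum>q\<in>insert q0 S. c1 q * H e q) = 0" .
      qed (use c0 d dq0 in \<open>auto simp: c1_def\<close>)
      then have "c1 = c0" by (rule uniq)
      then have "d = (\<lambda>_. 0)" by (auto simp: c1_def fun_eq_iff)
      then show False using d by auto
    qed
  next
    assume nk: "\<not> (\<exists>c. (\<forall>q. q \<notin> S \<longrightarrow> c q = 0) \<and> c \<noteq> (\<lambda>_. 0) \<and> (\<forall>e\<in>E. (\<Sum>q\<in>S. c q * H e q) = 0))"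
    have "card E < card (insert q0 S)" using cE fS q0 by simp
    then obtain c where c: "\<forall>q. q \<notin> insert q0 S \<longrightarrow> c q = 0" "\<exists>q\<in>insert q0 S. c q \<noteq> 0"
        "\<forall>e\<in>E. (\<Sum>q\<in>insert q0 S. c q * H e q) = 0"
      using underdet[OF fE, of "insert q0 S" H] fS by auto
    have cq0: "c q0 \<noteq> 0"
    proof
      assume z: "c q0 = 0"
      have "(\<forall>q. q \<notin> S \<longrightarrow> c q = 0) \<and> c \<noteq> (\<lambda>_. 0) \<and> (\<forall>e\<in>E. (\<Sum>q\<in>S. c q * H e q) = 0)"
      proof (intro conjI ballI allI impI)
        fix q assume "q \<notin> S" then show "c q = 0" using c z by (cases "q = q0") auto
      next
        show "c \<noteq> (\<lambda>_. 0)" using c z by (auto simp: fun_eq_iff)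
      next
        fix e assume "e \<in> E" then show "(\<Sum>q\<in>S. c q * H e q) = 0" using c z ins[of c e] by simp
      qed
      then show False using nk by blast
    qed
    define c' where "c' = (\<lambda>q. c q / c q0)"
    have ex: "(\<forall>q. q \<notin> insert q0 S \<longrightarrow> c' q = 0) \<and> c' q0 = 1 \<and> (\<forall>e\<in>E. (\<Sum>q\<in>insert q0 S. c' q * H e q) = 0)"
    proof (intro conjI ballI allI impI)
      fix e assume e: "e \<in> E"
      have "(\<Sum>q\<in>insert q0 S. c' q * H e q) = (\<Sum>q\<in>insert q0 S. c q * H e q) / c q0"
        by (simp add: c'_def sum_divide_distrib)
      then show "(\<Sum>q\<in>insert q0 S. c' q * H e q) = 0" using c e by simp
    qed (use c cq0 in \<open>auto simp: c'_def\<close>)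
    show "\<exists>!c. (\<forall>q. q \<notin> insert q0 S \<longrightarrow> c q = 0) \<and> c q0 = 1 \<and> (\<forall>e\<in>E. (\<Sum>q\<in>insert q0 S. c q * H e q) = 0)"
    proof (rule ex1I[of _ c'])
      show "(\<forall>q. q \<notin> insert q0 S \<longrightarrow> c' q = 0) \<and> c' q0 = 1 \<and> (\<forall>e\<in>E. (\<Sum>q\<in>insert q0 S. c' q * H e q) = 0)"
        by (rule ex)
    next
      fix c2 assume c2: "(\<forall>q. q \<notin> insert q0 S \<longrightarrow> c2 q = 0) \<and> c2 q0 = 1 \<and> (\<forall>e\<in>E. (\<Sum>q\<in>insert q0 S. c2 q * H e q) = 0)"
      define d where "d = (\<lambda>q. c2 q - c' q)"
      have "(\<forall>q. q \<notin> S \<longrightarrow> d q = 0)"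
      proof (intro allI impI)
        fix q assume "q \<notin> S"
        then show "d q = 0" using c2 ex by (cases "q = q0") (simp_all add: d_def)
      qed
      moreover have "\<forall>e\<in>E. (\<Sum>q\<in>S. d q * H e q) = 0"
      proof
        fix e assume e: "e \<in> E"
        have "(\<Sum>q\<in>insert q0 S. d q * H e q) = (\<Sum>q\<in>insert q0 S. c2 q * H e q) - (\<Sum>q\<in>insert q0 S. c' q * H e q)"
          by (simp add: d_def left_diff_distrib sum_subtractf)
        also have "\<dots> = 0" using c2 ex e by simp
        finally show "(\<Sum>q\<in>S. d q * H e q) = 0" using c2 ex by (simp add: ins d_def)
      qed
      ultimately have "d = (\<lambda>_. 0)" using nk by blast
      then show "c2 = c'" by (auto simp: d_def fun_eq_iff)
    qed
  qed
qed



lemma sum_shift_int: "(\<Sum>q\<in>{a..b}. f q) = (\<Sum>q\<in>{a-1..b-1}. f (q+1::int))"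
  by (rule sum.reindex_bij_witness[of _ "\<lambda>q. q + 1" "\<lambda>q. q - 1"]) auto

theorem proposition2p8:
  fixes r :: nat and \<mu> :: "nat \<Rightarrow> complex measure" and n m :: "nat \<Rightarrow> nat"
  assumes meas: "\<And>j. j < r \<Longrightarrow> circle_measure (\<mu> j)"
      and inf_supp: "\<And>j. j < r \<Longrightarrow> infinite (msupport (\<mu> j))"
  defines "N \<equiv> int (mnorm r n)" and "M \<equiv> int (mnorm r m)"
  shows
   "((\<exists>!c. in_span c (-M) N \<and> c N = 1 \<and>
        (\<forall>j<r. \<forall>p\<in>{-int (m j)..int (n j) - 1}.
           (\<integral>w. laurent c (-M) N w * w powi (-p) \<partial>(\<mu> j)) = 0))
     \<longleftrightarrow>
     \<not> (\<exists>c. in_span c (-M) (N - 1) \<and> c \<noteq> (\<lambda>_. 0) \<and>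
        (\<forall>j<r. \<forall>p\<in>{-int (m j)..int (n j) - 1}.
           (\<integral>w. laurent c (-M) (N - 1) w * w powi (-p) \<partial>(\<mu> j)) = 0)))
  \<and> ((\<exists>!c. in_span c (-M) N \<and> c N = 1 \<and>
        (\<forall>j<r. \<forall>p\<in>{-int (m j)..int (n j) - 1}.
           (\<integral>w. laurent c (-M) N w * w powi (-p) \<partial>(\<mu> j)) = 0))
     \<longleftrightarrow>
     (\<exists>!c. in_span c (-M) N \<and> c (-M) = 1 \<and>
        (\<forall>j<r. \<forall>p\<in>{-int (m j) + 1..int (n j)}.
           (\<integral>w. laurent c (-M) N w * w powi (-p) \<partial>(\<mu> j)) = 0)))
  \<and> ((\<exists>!c. in_span c (-M) N \<and> c N = 1 \<and>
        (\<forall>j<r. \<forall>p\<in>{-int (m j)..int (n j) - 1}.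
           (\<integral>w. laurent c (-M) N w * w powi (-p) \<partial>(\<mu> j)) = 0))
     \<longleftrightarrow>
     \<not> (\<exists>c. in_span c (-M + 1) N \<and> c \<noteq> (\<lambda>_. 0) \<and>
        (\<forall>j<r. \<forall>p\<in>{-int (m j) + 1..int (n j)}.
           (\<integral>w. laurent c (-M + 1) N w * w powi (-p) \<partial>(\<mu> j)) = 0)))"
proof -
  define H where "H = (\<lambda>e q. mom (\<mu> (fst e)) (snd e) q)"
  define E1 where "E1 = Sigma {..<r} (\<lambda>j. {-int (m j)..int (n j) - 1})"
  define E2 where "E2 = Sigma {..<r} (\<lambda>j. {-int (m j)+1..int (n j)})"
  have N0: "N \<ge> 0" "M \<ge> 0" by (simp_all add: N_def M_def)
  have conv: "\<And>P a b c. (\<forall>j<r. \<forall>p\<in>P j. (\<integral>w. laurent c a b w * w powi (-p) \<partial>(\<mu> j)) = 0)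
      \<longleftrightarrow> (\<forall>e\<in>Sigma {..<r} P. (\<Sum>q\<in>{a..b}. c q * H e q) = 0)"
    using meas by (auto simp: int_laurent H_def)
  have span: "\<And>c a b. in_span c a b \<longleftrightarrow> (\<forall>q. q \<notin> {a..b} \<longrightarrow> c q = 0)"
    by (auto simp: in_span_def)
  have cE1: "card E1 = mnorm r n + mnorm r m"
    unfolding E1_def mnorm_def sum.distrib[symmetric] by (simp add: card_SigmaI flip: of_nat_add)
  have cE2: "card E2 = mnorm r n + mnorm r m"
    unfolding E2_def mnorm_def sum.distrib[symmetric] by (simp add: card_SigmaI flip: of_nat_add)
  have cS1: "card {-M..N-1} = mnorm r n + mnorm r m" by (simp add: N_def M_def)
  have cS2: "card {-M+1..N} = mnorm r n + mnorm r m" by (simp add: N_def M_def)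
  have fE1: "finite E1" by (simp add: E1_def)
  have fE2: "finite E2" by (simp add: E2_def)
  have ins1: "insert N {-M..N-1} = {-M..N}" using N0 by auto
  have ins2: "insert (-M) {-M+1..N} = {-M..N}" using N0 by auto
  have AB: "(\<exists>!c. (\<forall>q. q \<notin> {-M..N} \<longrightarrow> c q = 0) \<and> c N = 1 \<and> (\<forall>e\<in>E1. (\<Sum>q\<in>{-M..N}. c q * H e q) = 0))
     \<longleftrightarrow> \<not> (\<exists>c. (\<forall>q. q \<notin> {-M..N-1} \<longrightarrow> c q = 0) \<and> c \<noteq> (\<lambda>_. 0) \<and> (\<forall>e\<in>E1. (\<Sum>q\<in>{-M..N-1}. c q * H e q) = 0))"
    using G[OF fE1, of "{-M..N-1}" N H] cE1 cS1 unfolding ins1 by simp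
  have CD: "(\<exists>!c. (\<forall>q. q \<notin> {-M..N} \<longrightarrow> c q = 0) \<and> c (-M) = 1 \<and> (\<forall>e\<in>E2. (\<Sum>q\<in>{-M..N}. c q * H e q) = 0))
     \<longleftrightarrow> \<not> (\<exists>c. (\<forall>q. q \<notin> {-M+1..N} \<longrightarrow> c q = 0) \<and> c \<noteq> (\<lambda>_. 0) \<and> (\<forall>e\<in>E2. (\<Sum>q\<in>{-M+1..N}. c q * H e q) = 0))"
    using G[OF fE2, of "{-M+1..N}" "-M" H] cE2 cS2 unfolding ins2 by simp
  have BD: "(\<exists>c. (\<forall>q. q \<notin> {-M..N-1} \<longrightarrow> c q = 0) \<and> c \<noteq> (\<lambda>_. 0) \<and> (\<forall>e\<in>E1. (\<Sum>q\<in>{-M..N-1}. c q * H e q) = 0))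
     \<longleftrightarrow> (\<exists>c. (\<forall>q. q \<notin> {-M+1..N} \<longrightarrow> c q = 0) \<and> c \<noteq> (\<lambda>_. 0) \<and> (\<forall>e\<in>E2. (\<Sum>q\<in>{-M+1..N}. c q * H e q) = 0))"
  proof
    assume "\<exists>c. (\<forall>q. q \<notin> {-M..N-1} \<longrightarrow> c q = 0) \<and> c \<noteq> (\<lambda>_. 0) \<and> (\<forall>e\<in>E1. (\<Sum>q\<in>{-M..N-1}. c q * H e q) = 0)"
    then obtain c where c: "\<forall>q. q \<notin> {-M..N-1} \<longrightarrow> c q = 0" "c \<noteq> (\<lambda>_. 0)" "\<forall>e\<in>E1. (\<Sum>q\<in>{-M..N-1}. c q * H e q) = 0"
      by blast
    define c' where "c' = (\<lambda>q. c (q - 1))"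
    have "(\<forall>q. q \<notin> {-M+1..N} \<longrightarrow> c' q = 0) \<and> c' \<noteq> (\<lambda>_. 0) \<and> (\<forall>e\<in>E2. (\<Sum>q\<in>{-M+1..N}. c' q * H e q) = 0)"
    proof (intro conjI allI impI ballI)
      fix q assume "q \<notin> {-M+1..N}" then show "c' q = 0" using c by (auto simp: c'_def)
    next
      obtain q where "c q \<noteq> 0" using c by (auto simp: fun_eq_iff)
      then have "c' (q+1) \<noteq> 0" by (simp add: c'_def)
      then show "c' \<noteq> (\<lambda>_. 0)" by (auto simp: fun_eq_iff)
    next
      fix e assume e: "e \<in> E2"
      then obtain j p where jp: "e = (j, p)" "j < r" "p \<in> {-int (m j)+1..int (n j)}" by (auto simp: E2_def)
      have e1: "(j, p - 1) \<in> E1" using jp by (auto simp: E1_def)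
      have "(\<Sum>q\<in>{-M+1..N}. c' q * H e q) = (\<Sum>q\<in>{-M..N-1}. c q * mom (\<mu> j) (p - 1 + 1) (q + 1))"
        by (subst sum_shift_int) (simp add: c'_def H_def jp)
      also have "\<dots> = (\<Sum>q\<in>{-M..N-1}. c q * H (j, p - 1) q)"
        using mom_shift[OF meas[OF jp(2)], of "p - 1"] by (simp add: H_def)
      also have "\<dots> = 0" using c e1 by blast
      finally show "(\<Sum>q\<in>{-M+1..N}. c' q * H e q) = 0" .
    qed
    then show "\<exists>c. (\<forall>q. q \<notin> {-M+1..N} \<longrightarrow> c q = 0) \<and> c \<noteq> (\<lambda>_. 0) \<and> (\<forall>e\<in>E2. (\<Sum>q\<in>{-M+1..N}. c q * H e q) = 0)"
      by blast
  next
    assume "\<exists>c. (\<forall>q. q \<notin> {-M+1..N} \<longrightarrow> c q = 0) \<and> c \<noteq> (\<lambda>_. 0) \<and> (\<forall>e\<in>E2. (\<Sum>q\<in>{-M+1..N}. c q * H e q) = 0)"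
    then obtain c where c: "\<forall>q. q \<notin> {-M+1..N} \<longrightarrow> c q = 0" "c \<noteq> (\<lambda>_. 0)" "\<forall>e\<in>E2. (\<Sum>q\<in>{-M+1..N}. c q * H e q) = 0"
      by blast
    define c' where "c' = (\<lambda>q. c (q + 1))"
    have "(\<forall>q. q \<notin> {-M..N-1} \<longrightarrow> c' q = 0) \<and> c' \<noteq> (\<lambda>_. 0) \<and> (\<forall>e\<in>E1. (\<Sum>q\<in>{-M..N-1}. c' q * H e q) = 0)"
    proof (intro conjI allI impI ballI)
      fix q assume "q \<notin> {-M..N-1}" then show "c' q = 0" using c by (auto simp: c'_def)
    next
      obtain q where "c q \<noteq> 0" using c by (auto simp: fun_eq_iff)
      then have "c' (q-1) \<noteq> 0" by (simp add: c'_def)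
      then show "c' \<noteq> (\<lambda>_. 0)" by (auto simp: fun_eq_iff)
    next
      fix e assume e: "e \<in> E1"
      then obtain j p where jp: "e = (j, p)" "j < r" "p \<in> {-int (m j)..int (n j) - 1}" by (auto simp: E1_def)
      have e2: "(j, p + 1) \<in> E2" using jp by (auto simp: E2_def)
      have "(\<Sum>q\<in>{-M+1..N}. c q * H (j, p + 1) q) = (\<Sum>q\<in>{-M..N-1}. c (q + 1) * mom (\<mu> j) (p + 1) (q + 1))"
        by (subst sum_shift_int) (simp add: H_def)
      also have "\<dots> = (\<Sum>q\<in>{-M..N-1}. c' q * H e q)"
        using mom_shift[OF meas[OF jp(2)]] by (simp add: H_def c'_def jp)
      finally show "(\<Sum>q\<in>{-M..N-1}. c' q * H e q) = 0" using c e2 by simp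
    qed
    then show "\<exists>c. (\<forall>q. q \<notin> {-M..N-1} \<longrightarrow> c q = 0) \<and> c \<noteq> (\<lambda>_. 0) \<and> (\<forall>e\<in>E1. (\<Sum>q\<in>{-M..N-1}. c q * H e q) = 0)"
      by blast
  qed
  have A: "(\<exists>!c. in_span c (-M) N \<and> c N = 1 \<and>
        (\<forall>j<r. \<forall>p\<in>{-int (m j)..int (n j) - 1}.
           (\<integral>w. laurent c (-M) N w * w powi (-p) \<partial>(\<mu> j)) = 0)) \<longleftrightarrow>
      (\<exists>!c. (\<forall>q. q \<notin> {-M..N} \<longrightarrow> c q = 0) \<and> c N = 1 \<and> (\<forall>e\<in>E1. (\<Sum>q\<in>{-M..N}. c q * H e q) = 0))"
    unfolding span conv E1_def by (rule refl)
  have B: "(\<exists>c. in_span c (-M) (N - 1) \<and> c \<noteq> (\<lambda>_. 0) \<and>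
        (\<forall>j<r. \<forall>p\<in>{-int (m j)..int (n j) - 1}.
           (\<integral>w. laurent c (-M) (N - 1) w * w powi (-p) \<partial>(\<mu> j)) = 0)) \<longleftrightarrow>
      (\<exists>c. (\<forall>q. q \<notin> {-M..N-1} \<longrightarrow> c q = 0) \<and> c \<noteq> (\<lambda>_. 0) \<and> (\<forall>e\<in>E1. (\<Sum>q\<in>{-M..N-1}. c q * H e q) = 0))"
    unfolding span conv E1_def by (rule refl)
  have C: "(\<exists>!c. in_span c (-M) N \<and> c (-M) = 1 \<and>
        (\<forall>j<r. \<forall>p\<in>{-int (m j) + 1..int (n j)}.
           (\<integral>w. laurent c (-M) N w * w powi (-p) \<partial>(\<mu> j)) = 0)) \<longleftrightarrow>
      (\<exists>!c. (\<forall>q. q \<notin> {-M..N} \<longrightarrow> c q = 0) \<and> c (-M) = 1 \<and> (\<forall>e\<in>E2. (\<Sum>q\<in>{-M..N}. c q * H e q) = 0))"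
    unfolding span conv E2_def by (rule refl)
  have D: "(\<exists>c. in_span c (-M + 1) N \<and> c \<noteq> (\<lambda>_. 0) \<and>
        (\<forall>j<r. \<forall>p\<in>{-int (m j) + 1..int (n j)}.
           (\<integral>w. laurent c (-M + 1) N w * w powi (-p) \<partial>(\<mu> j)) = 0)) \<longleftrightarrow>
      (\<exists>c. (\<forall>q. q \<notin> {-M+1..N} \<longrightarrow> c q = 0) \<and> c \<noteq> (\<lambda>_. 0) \<and> (\<forall>e\<in>E2. (\<Sum>q\<in>{-M+1..N}. c q * H e q) = 0))"
    unfolding span conv E2_def by (rule refl)
  show ?thesis
    unfolding A B C D AB CD BD by (rule TrueI conjI refl)+
qed

end
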